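(* Let $X$ be a finite set of proposals. Every profile-index-based DSF $\Delta_\delta$ induced by a neutral profile index function $\delta$ satisfies Clone Consistency: for every profile $R$ and proposals $x,x',y$ such that $x$ and $x'$ are clones in $R$ but $x$ and $y$ are not clones in $R$, if $\{x,y\}\subseteq\Delta_\delta(R)$ then $\{x,x',y\}\subseteq\Delta_\delta(R)$.
   Context: $X!$ is the set of strict linear orders on $X$; a profile is a function $R:N\to X!$ with $N\subset\mathbb{N}$ finite and nonempty. A profile index function is a function $\delta$ from the set of all profiles to $\mathbb{R}$; it is neutral if $\delta(R)=\delta(\sigma(R))$ for every permutation $\sigma:X\to X$ (applied to rename proposals in every ranking). For a proposal $x$, $R^{\hat{x}}$ is the profile obtained from $R$ by moving $x$ to the top of every agent's ranking (leaving the relative order of the other proposals unchanged). The profile-index-based DSF is $\Delta_\delta(R)=\arg\min_{x\in X}\delta(R^{\hat{x}})$. Two proposals are clones in $R$ if they appear adjacent to one another in every agent's ranking in $R$. *)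

theory Defs
  imports Main "HOL.Real"
begin

text \<open>Proposals form a finite type 'a (X = UNIV). A ranking is a strict linear order
 r on X, where (a, b) \<in> r means a is ranked above b.\<close>

type_synonym 'a ranking = "('a \<times> 'a) set"
type_synonym 'a profile = "nat \<Rightarrow> 'a ranking option"

definition is_ranking :: "'a ranking \<Rightarrow> bool" where
  "is_ranking r \<longleftrightarrow> strict_linear_order_on UNIV r"

definition is_profile :: "'a profile \<Rightarrow> bool" where
  "is_profile R \<longleftrightarrow> finite (dom R) \<and> dom R \<noteq> {} \<and> (\<forall>i r. R i = Some r \<longrightarrow> is_ranking r)"

definition rename_profile :: "('a \<Rightarrow> 'a) \<Rightarrow> 'a profile \<Rightarrow> 'a profile" where
  "rename_profile \<sigma> R = (\<lambda>i. map_option (\<lambda>r. map_prod \<sigma> \<sigma> ` r) (R i))"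

definition neutral :: "('a profile \<Rightarrow> real) \<Rightarrow> bool" where
  "neutral \<delta> \<longleftrightarrow> (\<forall>R \<sigma>. is_profile R \<longrightarrow> bij \<sigma> \<longrightarrow> \<delta> R = \<delta> (rename_profile \<sigma> R))"

definition move_top :: "'a \<Rightarrow> 'a ranking \<Rightarrow> 'a ranking" where
  "move_top x r = {(a, b) \<in> r. a \<noteq> x \<and> b \<noteq> x} \<union> {(x, b) | b. b \<noteq> x}"

definition hat_profile :: "'a profile \<Rightarrow> 'a \<Rightarrow> 'a profile" where
  "hat_profile R x = (\<lambda>i. map_option (move_top x) (R i))"

definition DSF :: "('a profile \<Rightarrow> real) \<Rightarrow> 'a profile \<Rightarrow> 'a set" where
  "DSF \<delta> R = {x. \<forall>z. \<delta> (hat_profile R x) \<le> \<delta> (hat_profile R z)}"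

definition adjacent :: "'a ranking \<Rightarrow> 'a \<Rightarrow> 'a \<Rightarrow> bool" where
  "adjacent r x x' \<longleftrightarrow> \<not> (\<exists>z. ((x, z) \<in> r \<and> (z, x') \<in> r) \<or> ((x', z) \<in> r \<and> (z, x) \<in> r))"

definition clones :: "'a profile \<Rightarrow> 'a \<Rightarrow> 'a \<Rightarrow> bool" where
  "clones R x x' \<longleftrightarrow> (\<forall>i r. R i = Some r \<longrightarrow> adjacent r x x')"

end

theory Submission
  imports Defs
begin

definition swp :: "'a \<Rightarrow> 'a \<Rightarrow> 'a \<Rightarrow> 'a" where
  "swp x x' z = (if z = x then x' else if z = x' then x else z)"

lemma swp_inv: "swp x x' (swp x x' z) = z"
  by (auto simp: swp_def)

lemma bij_swp: "bij (swp x x')"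
  by (metis bijI' swp_inv)

lemma image_inv: 
  assumes "\<And>z. s (s z) = z"
  shows "map_prod s s ` S = {(a, b). (s a, s b) \<in> S}"
proof (rule set_eqI)
  fix p :: "'a \<times> 'a"
  obtain a b where p: "p = (a,b)" by (cases p)
  have "(a, b) \<in> map_prod s s ` S \<longleftrightarrow> (s a, s b) \<in> S"
  proof
    assume "(a, b) \<in> map_prod s s ` S"
    then obtain c d where "(c,d) \<in> S" "a = s c" "b = s d" by auto
    then show "(s a, s b) \<in> S" using assms by simp
  next
    assume h: "(s a, s b) \<in> S"
    have "(a, b) = map_prod s s (s a, s b)" using assms by simp
    then show "(a, b) \<in> map_prod s s ` S" using h by (rule image_eqI)
  qed
  then show "p \<in> map_prod s s ` S \<longleftrightarrow> p \<in> {(a, b). (s a, s b) \<in> S}" by (simp add: p)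
qed

lemma move_top_ranking:
  assumes "is_ranking r" shows "is_ranking (move_top x r)"
proof -
  have tr: "trans r" and ir: "\<And>a. (a,a) \<notin> r" and to: "\<And>a b. a \<noteq> b \<Longrightarrow> (a,b) \<in> r \<or> (b,a) \<in> r"
    using assms(1) unfolding is_ranking_def strict_linear_order_on_def irrefl_on_def total_on_def
    by auto
  have "trans (move_top x r)"
  proof (rule transI)
    fix a b c assume "(a,b) \<in> move_top x r" "(b,c) \<in> move_top x r"
    then show "(a,c) \<in> move_top x r" using tr unfolding move_top_def trans_def by blast
  qed
  moreover have "irrefl (move_top x r)" using ir unfolding move_top_def irrefl_on_def by blast
  moreover have "total_on UNIV (move_top x r)" using to unfolding move_top_def total_on_def by blast
  ultimately show ?thesis unfolding is_ranking_def strict_linear_order_on_def by blast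
qed

lemma move_top_swap:
  assumes "is_ranking r" "adjacent r x x'"
  shows "map_prod (swp x x') (swp x x') ` move_top x r = move_top x' r"
proof -
  have tr: "trans r" and ir: "\<And>a. (a,a) \<notin> r" and to: "\<And>a b. a \<noteq> b \<Longrightarrow> (a,b) \<in> r \<or> (b,a) \<in> r"
    using assms(1) unfolding is_ranking_def strict_linear_order_on_def irrefl_on_def total_on_def
    by auto
  have adj: "\<And>z. \<not> ((x, z) \<in> r \<and> (z, x') \<in> r)" "\<And>z. \<not> ((x', z) \<in> r \<and> (z, x) \<in> r)"
    using assms(2) unfolding adjacent_def by auto
  have k1: "(x,c) \<in> r \<longleftrightarrow> (x',c) \<in> r" if "c \<noteq> x" "c \<noteq> x'" for c
    using to[OF that(1)] to[OF that(2)] adj[of c] by blast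
  have k2: "(c,x) \<in> r \<longleftrightarrow> (c,x') \<in> r" if "c \<noteq> x" "c \<noteq> x'" for c
    using to[OF that(1)] to[OF that(2)] adj[of c] by blast
  have key: "(swp x x' a, swp x x' b) \<in> r \<longleftrightarrow> (a,b) \<in> r" if "a \<noteq> x'" "b \<noteq> x'" for a b
  proof (cases "a = x")
    case True
    show ?thesis
    proof (cases "b = x")
      case True then show ?thesis using \<open>a = x\<close> ir by (simp add: swp_def)
    next
      case False then show ?thesis using \<open>a = x\<close> k1[of b] that by (simp add: swp_def)
    qed
  next
    case False
    show ?thesis
    proof (cases "b = x")
      case True then show ?thesis using \<open>a \<noteq> x\<close> k2[of a] that by (simp add: swp_def)
    next
      case False then show ?thesis using \<open>a \<noteq> x\<close> that by (simp add: swp_def)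
    qed
  qed
  have s1: "swp x x' a = x \<longleftrightarrow> a = x'" for a by (auto simp: swp_def)
  show ?thesis
    unfolding image_inv[of "swp x x'", OF swp_inv]
  proof (rule set_eqI)
    fix p :: "'a \<times> 'a"
    obtain a b where p: "p = (a,b)" by (cases p)
    show "p \<in> {(a, b). (swp x x' a, swp x x' b) \<in> move_top x r} \<longleftrightarrow> p \<in> move_top x' r"
      unfolding p move_top_def using key[of a b] s1[of a] s1[of b] by auto
  qed
qed

theorem proposition4:
  fixes \<delta> :: "('a::finite) profile \<Rightarrow> real"
    and R :: "'a profile"
    and x x' y :: 'a
  assumes "neutral \<delta>"
    and "is_profile R"
    and "clones R x x'"
    and "\<not> clones R x y"
    and "{x, y} \<subseteq> DSF \<delta> R"
  shows "{x, x', y} \<subseteq> DSF \<delta> R"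
proof -
  have d: "dom (hat_profile R x) = dom R" by (auto simp: hat_profile_def)
  have "\<forall>i r. hat_profile R x i = Some r \<longrightarrow> is_ranking r"
  proof (intro allI impI)
    fix i r assume "hat_profile R x i = Some r"
    then obtain r0 where "R i = Some r0" "r = move_top x r0" by (auto simp: hat_profile_def)
    then show "is_ranking r" using assms(2) move_top_ranking unfolding is_profile_def by metis
  qed
  then have hp: "is_profile (hat_profile R x)"
    using assms(2) d unfolding is_profile_def by simp
  have eq: "rename_profile (swp x x') (hat_profile R x) = hat_profile R x'"
  proof
    fix i
    show "rename_profile (swp x x') (hat_profile R x) i = hat_profile R x' i"
    proof (cases "R i")
      case None then show ?thesis by (simp add: rename_profile_def hat_profile_def)
    next
      case (Some r)
      then have "is_ranking r" "adjacent r x x'" using assms(2,3)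
        unfolding is_profile_def clones_def by auto
      then show ?thesis using Some move_top_swap
        by (simp add: rename_profile_def hat_profile_def)
    qed
  qed
  have "\<delta> (hat_profile R x) = \<delta> (hat_profile R x')"
    using assms(1) hp bij_swp eq unfolding neutral_def by metis
  then have "x' \<in> DSF \<delta> R" using assms(5) unfolding DSF_def by auto
  then show ?thesis using assms(5) by auto
qed

end
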